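(* Let $f:\mathbb{R}^d\to\mathbb{R}$ be differentiable with $f^*:=\inf_\theta f(\theta)>-\infty$ and $\delta(\theta):=f(\theta)-f^*$. Let $\xi\in(-\infty,1/2]$ and $L_0,L_1\ge0$ (not both zero). Suppose $f$ satisfies N\L{} with coefficient $C(\cdot)$ and degree $\xi$, and NS with a function $\beta(\cdot)$ satisfying $\beta(\theta)\le L_0\frac{\|\nabla f(\theta)\|_2^2}{\delta(\theta)^{2-2\xi}}+L_1\|\nabla f(\theta)\|_2$ whenever $\delta(\theta)>0$. Run GNGD $\theta_{t+1}=\theta_t-\frac{\nabla f(\theta_t)}{\beta(\theta_t)}$ from $\theta_1$, assume $\delta(\theta_t)>0$ and $\nabla f(\theta_t)\neq0$ for all $t$, and assume $C:=\inf_{t\ge1}C(\theta_t)>0$. Let $a:=\frac{1}{2}\Big(L_0+\frac{L_1\,\delta(\theta_1)^{1-\xi}}{C}\Big)^{-1}$. Then $\delta(\theta_{t+1})\le\delta(\theta_t)$ for all $t$, and: (i) if $\xi<1/2$, then for all $t\ge1$, $\delta(\theta_t)\le\big[\delta(\theta_1)^{-(1-2\xi)}+(1-2\xi)\,a\,(t-1)\big]^{-\frac{1}{1-2\xi}}$; (ii) if $\xi=1/2$, then for all $t\ge1$, $\delta(\theta_t)\le\exp\Big\{-\frac{C\,(t-1)}{2\,(L_0C+L_1\delta(\theta_1)^{1/2})}\Big\}\,\delta(\theta_1)$.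
   Context: Non-uniform smoothness (NS): a differentiable $f:\mathbb{R}^d\to\mathbb{R}$ satisfies NS with a function $\beta:\mathbb{R}^d\to(0,\infty)$ if for all $\theta,\theta'\in\mathbb{R}^d$, $\big|f(\theta')-f(\theta)-\langle\nabla f(\theta),\theta'-\theta\rangle\big|\le\frac{\beta(\theta)}{2}\|\theta'-\theta\|_2^2$. Non-uniform \L{}ojasiewicz (N\L{}) inequality: $f$ satisfies N\L{} with coefficient $C:\mathbb{R}^d\to(0,\infty)$ and degree $\xi\in(-\infty,1]$ if $\|\nabla f(\theta)\|_2\ge C(\theta)\,|f(\theta)-f^*|^{1-\xi}$ for all $\theta$, where $f^*=\inf_\theta f(\theta)$. *)

theory Defs
  imports "HOL-Analysis.Analysis"
begin

text \<open>The gradient of f is passed explicitly as a function g, with the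
hypothesis that g x is the gradient of f at x (GDERIV).\<close>

definition fstar :: "('a \<Rightarrow> real) \<Rightarrow> real" where
  "fstar f = Inf (range f)"

definition NS :: "('a::real_inner \<Rightarrow> real) \<Rightarrow> ('a \<Rightarrow> 'a) \<Rightarrow> ('a \<Rightarrow> real) \<Rightarrow> bool" where
  "NS f g \<beta> \<longleftrightarrow> (\<forall>\<theta>. \<beta> \<theta> > 0) \<and>
     (\<forall>\<theta> \<theta>'. \<bar>f \<theta>' - f \<theta> - inner (g \<theta>) (\<theta>' - \<theta>)\<bar> \<le> \<beta> \<theta> / 2 * (norm (\<theta>' - \<theta>))\<^sup>2)"

definition NL :: "('a::real_inner \<Rightarrow> real) \<Rightarrow> ('a \<Rightarrow> 'a) \<Rightarrow> ('a \<Rightarrow> real) \<Rightarrow> real \<Rightarrow> bool" where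
  "NL f g C \<xi> \<longleftrightarrow> \<xi> \<le> 1 \<and> (\<forall>\<theta>. C \<theta> > 0) \<and>
     (\<forall>\<theta>. norm (g \<theta>) \<ge> C \<theta> * \<bar>f \<theta> - fstar f\<bar> powr (1 - \<xi>))"

end

theory Submission
  imports Defs
begin


lemma one_step_pow:
  fixes d d' a p :: real
  assumes d: "d > 0" and d': "d' > 0" and a: "a > 0" and p: "p > 0"
    and st: "d' \<le> d - a * d powr (1 + p)"
  shows "d' powr (-p) \<ge> d powr (-p) + p * a"
proof -
  define x where "x = a * d powr p"
  have dp: "d powr (1+p) = d * d powr p" using d by (simp add: powr_add)
  have st2: "d' \<le> d * (1 - x)" using st dp by (simp add: x_def algebra_simps)
  have x1: "1 - x > 0"
  proof (rule ccontr)
    assume "\<not> 1 - x > 0"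
    hence "d * (1 - x) \<le> 0" using d by (simp add: mult_nonneg_nonpos)
    thus False using st2 d' by linarith
  qed
  have "d' powr (-p) \<ge> (d * (1 - x)) powr (-p)"
    using powr_mono2'[of "-p" d' "d*(1-x)"] p d' st2 by simp
  also have "(d * (1 - x)) powr (-p) = d powr (-p) * (1 - x) powr (-p)"
    by (simp add: powr_mult)
  finally have A: "d' powr (-p) \<ge> d powr (-p) * (1 - x) powr (-p)" .
  have "(1 - x) powr (-p) = exp (-p * ln (1 - x))" using x1 by (simp add: powr_def)
  moreover have "ln (1 - x) \<le> -x" using ln_le_minus_one[OF x1] by simp
  hence "-p * ln (1 - x) \<ge> p * x" using p mult_left_mono[of "ln (1-x)" "-x" p] by simp
  hence "exp (-p * ln (1 - x)) \<ge> exp (p * x)" by simp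
  moreover have "exp (p*x) \<ge> 1 + p * x" by (rule exp_ge_add_one_self)
  ultimately have B: "(1 - x) powr (-p) \<ge> 1 + p * x" by linarith
  have "d powr (-p) * (1 - x) powr (-p) \<ge> d powr (-p) * (1 + p*x)"
    using B d by (intro mult_left_mono) auto
  also have "d powr (-p) * (1 + p*x) = d powr (-p) + p * a"
    using d by (simp add: x_def algebra_simps powr_minus field_simps)
  finally show ?thesis using A by linarith
qed

lemma rec_pow:
  fixes d :: "nat \<Rightarrow> real" and a p :: real
  assumes pos: "\<And>t. t \<ge> 1 \<Longrightarrow> d t > 0"
    and st: "\<And>t. t \<ge> 1 \<Longrightarrow> d (Suc t) \<le> d t - a * d t powr (1 + p)"
    and a: "a > 0" and p: "p > 0"
  shows "t \<ge> 1 \<Longrightarrow> d t \<le> (d 1 powr (-p) + p * a * (real t - 1)) powr (-(1/p))"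
proof -
  have I: "d t powr (-p) \<ge> d 1 powr (-p) + p * a * (real t - 1)" if "t \<ge> 1" for t
    using that
  proof (induction t rule: dec_induct)
    case base then show ?case by simp
  next
    case (step n)
    have "d (Suc n) powr (-p) \<ge> d n powr (-p) + p * a"
      using one_step_pow[OF pos pos a p st] step by auto
    then show ?case using step by (simp add: algebra_simps)
  qed
  assume t: "t \<ge> 1"
  have R: "d 1 powr (-p) + p * a * (real t - 1) > 0"
    using t a p pos[of 1] by (simp add: add_pos_nonneg)
  have "d t = (d t powr (-p)) powr (-(1/p))" using p pos[OF t] by (simp add: powr_powr)
  also have "\<dots> \<le> (d 1 powr (-p) + p * a * (real t - 1)) powr (-(1/p))"
    using powr_mono2'[of "-(1/p)", OF _ R I[OF t]] p by simp
  finally show ?thesis .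
qed

lemma rec_exp:
  fixes d :: "nat \<Rightarrow> real" and a :: real
  assumes pos: "\<And>t. t \<ge> 1 \<Longrightarrow> d t > 0"
    and st: "\<And>t. t \<ge> 1 \<Longrightarrow> d (Suc t) \<le> d t - a * d t"
  shows "t \<ge> 1 \<Longrightarrow> d t \<le> exp (-(a * (real t - 1))) * d 1"
proof (induction t rule: dec_induct)
  case base then show ?case by simp
next
  case (step n)
  have n1: "n \<ge> 1" using step.hyps by simp
  have e1: "d (Suc n) \<le> (1 - a) * d n" using st[OF n1] by (simp add: left_diff_distrib)
  have ea: "1 - a \<le> exp (-a)" using exp_ge_add_one_self[of "-a"] by simp
  have e2: "(1 - a) * d n \<le> exp (-a) * d n"
    by (rule mult_right_mono[OF ea less_imp_le[OF pos[OF n1]]])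
  have e3: "exp (-a) * d n \<le> exp (-a) * (exp (-(a * (real n - 1))) * d 1)"
    by (rule mult_left_mono[OF step.IH]) simp
  have ee: "-a + -(a * (real n - 1)) = -(a * (real (Suc n) - 1))" by (simp add: algebra_simps)
  have e4: "exp (-a) * (exp (-(a * (real n - 1))) * d 1) = exp (-(a * (real (Suc n) - 1))) * d 1"
    unfolding mult.assoc[symmetric] exp_add[symmetric] ee ..
  show ?case using e1 e2 e3 e4 by linarith
qed



lemma step_aux:
  fixes f :: "'a::real_inner \<Rightarrow> real"
  assumes b: "b > 0" and ns: "\<bar>f y - f x - inner G (y - x)\<bar> \<le> b/2 * (norm (y-x))\<^sup>2"
    and y: "y = x - (1/b) *\<^sub>R G"
  shows "f y \<le> f x - (norm G)\<^sup>2/(2*b)"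
proof -
  have e: "y - x = (-(1/b)) *\<^sub>R G" using y by simp
  have i: "inner G (y-x) = -(1/b) * (norm G)\<^sup>2"
    unfolding e by (simp only: inner_scaleR_right dot_square_norm)
  have nn: "norm (y-x) = norm G / b" unfolding e using b by simp
  have n: "(norm (y-x))\<^sup>2 = (norm G)\<^sup>2 / b^2" unfolding nn by (simp add: power_divide)
  have "f y - f x - inner G (y-x) \<le> b/2 * (norm (y-x))\<^sup>2"
    using ns abs_ge_self order_trans by blast
  hence A: "f y \<le> f x - (1/b) * (norm G)\<^sup>2 + b/2 * ((norm G)\<^sup>2 / b^2)"
    unfolding i n by linarith
  have B: "b/2 * ((norm G)\<^sup>2 / b^2) = (norm G)\<^sup>2/(2*b)" using b
    by (simp add: power2_eq_square)
  have C: "(1/b) * (norm G)\<^sup>2 = 2 * ((norm G)\<^sup>2/(2*b))" using b by simp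
  show ?thesis using A B C by linarith
qed

lemma contr_aux:
  fixes G b q q1 Cinf L0 L1 K :: real
  assumes G: "G > 0" and b: "b > 0" and q: "q > 0" and qle: "q \<le> q1" and Gq: "G \<ge> Cinf * q"
    and Cinfp: "Cinf > 0" and L: "L0 \<ge> 0" "L1 \<ge> 0"
    and bb: "b \<le> L0 * G^2 / q^2 + L1 * G" and K: "K = L0 + L1 * q1 / Cinf" and Kp: "K > 0"
  shows "1/2 * inverse K * q^2 \<le> G^2 / (2*b)"
proof -
  have bq: "b * q^2 \<le> L0 * G^2 + L1 * G * q^2"
  proof -
    have "b * q^2 \<le> (L0 * G^2 / q^2 + L1 * G) * q^2" using bb q by (intro mult_right_mono) auto
    also have "\<dots> = L0 * G^2 + L1 * G * q^2" using q by (simp add: distrib_right)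
    finally show ?thesis .
  qed
  have qG: "q^2 * Cinf \<le> G * q1"
  proof -
    have "q^2 * Cinf = q * (Cinf * q)" by (simp add: power2_eq_square)
    also have "\<dots> \<le> q * G" using Gq q by (intro mult_left_mono) auto
    also have "\<dots> \<le> q1 * G" using qle G by (intro mult_right_mono) auto
    also have "\<dots> = G * q1" by (rule mult.commute)
    finally show ?thesis .
  qed
  have "G * q^2 \<le> q1 / Cinf * G^2"
  proof -
    have "G * q^2 = G * (q^2 * Cinf) / Cinf" using Cinfp by simp
    also have "\<dots> \<le> G * (G * q1) / Cinf" using qG G Cinfp
      by (intro divide_right_mono mult_left_mono) auto
    also have "\<dots> = q1 / Cinf * G^2" unfolding power2_eq_square by (simp add: ac_simps)
    finally show ?thesis .
  qed
  hence "L1 * (G * q^2) \<le> L1 * (q1 / Cinf * G^2)" by (rule mult_left_mono[OF _ L(2)])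
  hence "b * q^2 \<le> K * G^2" using bq unfolding K by (simp add: algebra_simps)
  hence "q^2 * b \<le> G^2 * K" by (simp only: mult.commute)
  hence H: "q^2 / K \<le> G^2 / b" using b Kp by (simp add: divide_le_eq le_divide_eq pos_divide_le_eq pos_le_divide_eq)
  have e1: "1/2 * inverse K * q^2 = (q^2 / K) / 2" by (simp only: divide_inverse mult_1 mult_ac)
  have e2: "G^2 / (2*b) = (G^2 / b) / 2" by (simp only: divide_divide_eq_left mult.commute)
  show ?thesis unfolding e1 e2 by (rule divide_right_mono[OF H]) simp
qed



lemma aux_eq:
  fixes c K x :: real
  assumes "c \<noteq> 0" "K \<noteq> 0"
  shows "c * x / (2 * (K * c)) = 1/2 * inverse K * x"
  using assms by (simp add: field_simps)

lemma final_form: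
  fixes \<delta> :: "'b \<Rightarrow> real" and \<theta> :: "nat \<Rightarrow> 'b" and Cinf a L0 L1 \<xi> :: real
  assumes "P1"
    and "\<xi> < 1/2 \<longrightarrow> (\<forall>t\<ge>1. \<delta> (\<theta> t) \<le>
        (\<delta> (\<theta> 1) powr (-(1 - 2*\<xi>)) + (1 - 2*\<xi>) * a * (real t - 1)) powr (-(1 / (1 - 2*\<xi>))))"
    and "\<xi> = 1/2 \<longrightarrow> (\<forall>t\<ge>1. \<delta> (\<theta> t) \<le>
        exp (- (Cinf * (real t - 1) / (2 * (L0 * Cinf + L1 * \<delta> (\<theta> 1) powr (1/2))))) * \<delta> (\<theta> 1))"
    and "a = 1/2 * inverse (L0 + L1 * \<delta> (\<theta> 1) powr (1 - \<xi>) / Cinf)"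
  shows "P1 \<and> (let \<delta>' = \<delta>; Cinf' = Cinf;
         a' = 1/2 * inverse (L0 + L1 * \<delta>' (\<theta> 1) powr (1 - \<xi>) / Cinf') in
     (\<xi> < 1/2 \<longrightarrow> (\<forall>t\<ge>1. \<delta>' (\<theta> t) \<le>
        (\<delta>' (\<theta> 1) powr (-(1 - 2*\<xi>)) + (1 - 2*\<xi>) * a' * (real t - 1)) powr (-(1 / (1 - 2*\<xi>))))) \<and>
     (\<xi> = 1/2 \<longrightarrow> (\<forall>t\<ge>1. \<delta>' (\<theta> t) \<le>
        exp (- (Cinf' * (real t - 1) / (2 * (L0 * Cinf' + L1 * \<delta>' (\<theta> 1) powr (1/2))))) * \<delta>' (\<theta> 1))))"
  using assms unfolding Let_def by blast

theorem theorem1: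
  fixes f :: "real ^ 'n \<Rightarrow> real" and g :: "real ^ 'n \<Rightarrow> real ^ 'n"
    and \<beta> C :: "real ^ 'n \<Rightarrow> real" and \<theta> :: "nat \<Rightarrow> real ^ 'n"
    and \<xi> L0 L1 :: real
  assumes grad: "\<And>x. GDERIV f x :> g x"
    and bdd: "bdd_below (range f)"
    and xi: "\<xi> \<le> 1/2"
    and L: "L0 \<ge> 0" "L1 \<ge> 0" "\<not> (L0 = 0 \<and> L1 = 0)"
    and NL: "NL f g C \<xi>"
    and NS: "NS f g \<beta>"
    and beta_bound: "\<And>x. f x - fstar f > 0 \<Longrightarrow>
        \<beta> x \<le> L0 * (norm (g x))\<^sup>2 / (f x - fstar f) powr (2 - 2 * \<xi>) + L1 * norm (g x)"
    and GNGD: "\<And>t. t \<ge> 1 \<Longrightarrow> \<theta> (Suc t) = \<theta> t - (1 / \<beta> (\<theta> t)) *\<^sub>R g (\<theta> t)"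
    and pos: "\<And>t. t \<ge> 1 \<Longrightarrow> f (\<theta> t) - fstar f > 0"
    and nz: "\<And>t. t \<ge> 1 \<Longrightarrow> g (\<theta> t) \<noteq> 0"
    and Cpos: "(INF t\<in>{1..}. C (\<theta> t)) > 0"
  shows "(\<forall>t\<ge>1. f (\<theta> (Suc t)) - fstar f \<le> f (\<theta> t) - fstar f) \<and>
    (let \<delta> = (\<lambda>x. f x - fstar f); Cinf = (INF t\<in>{1..}. C (\<theta> t));
         a = 1/2 * inverse (L0 + L1 * \<delta> (\<theta> 1) powr (1 - \<xi>) / Cinf) in
     (\<xi> < 1/2 \<longrightarrow> (\<forall>t\<ge>1. \<delta> (\<theta> t) \<le>
        (\<delta> (\<theta> 1) powr (-(1 - 2*\<xi>)) + (1 - 2*\<xi>) * a * (real t - 1)) powr (-(1 / (1 - 2*\<xi>))))) \<and>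
     (\<xi> = 1/2 \<longrightarrow> (\<forall>t\<ge>1. \<delta> (\<theta> t) \<le>
        exp (- (Cinf * (real t - 1) / (2 * (L0 * Cinf + L1 * \<delta> (\<theta> 1) powr (1/2))))) * \<delta> (\<theta> 1))))"
  proof -
  define d where "d = (\<lambda>t. f (\<theta> t) - fstar f)"
  define Cinf where "Cinf = (INF t\<in>{1..}. C (\<theta> t))"
  define q1 where "q1 = d 1 powr (1 - \<xi>)"
  define K where "K = L0 + L1 * q1 / Cinf"
  define a where "a = 1/2 * inverse K"
  have fs: "fstar f \<le> f x" for x unfolding fstar_def by (rule cInf_lower[OF rangeI bdd])
  have Cp: "C x > 0" for x using NL unfolding NL_def by blast
  have bp: "\<beta> x > 0" for x using NS unfolding NS_def by blast
  have NSi: "\<bar>f y - f x - inner (g x) (y - x)\<bar> \<le> \<beta> x / 2 * (norm (y - x))\<^sup>2" for x y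
    using NS unfolding NS_def by blast
  have NLi: "norm (g x) \<ge> C x * \<bar>f x - fstar f\<bar> powr (1 - \<xi>)" for x
    using NL unfolding NL_def by blast
  have Cinfp: "Cinf > 0" using Cpos unfolding Cinf_def .
  have Cle: "Cinf \<le> C (\<theta> t)" if "t \<ge> 1" for t
    unfolding Cinf_def
  proof (rule cINF_lower)
    show "bdd_below ((\<lambda>t. C (\<theta> t)) ` {1..})" by (rule bdd_belowI[of _ 0]) (auto simp: less_imp_le[OF Cp])
    show "t \<in> {1..}" using that by simp
  qed
  have dpos: "d t > 0" if "t \<ge> 1" for t unfolding d_def using pos[OF that] .
  have step: "d (Suc t) \<le> d t - (norm (g (\<theta> t)))\<^sup>2 / (2 * \<beta> (\<theta> t))" if t: "t \<ge> 1" for t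
  proof -
    have "f (\<theta> (Suc t)) \<le> f (\<theta> t) - (norm (g (\<theta> t)))\<^sup>2 / (2 * \<beta> (\<theta> t))"
      by (rule step_aux[OF bp NSi[where x="\<theta> t" and y="\<theta> (Suc t)"] GNGD[OF t]])
    thus ?thesis unfolding d_def by linarith
  qed
  have mono: "d (Suc t) \<le> d t" if "t \<ge> 1" for t
  proof -
    have "(norm (g (\<theta> t)))\<^sup>2 / (2 * \<beta> (\<theta> t)) \<ge> 0" using bp[of "\<theta> t"] by simp
    thus ?thesis using step[OF that] by linarith
  qed
  have dle1: "d t \<le> d 1" if "t \<ge> 1" for t
    using that
  proof (induction t rule: dec_induct)
    case base then show ?case by simp
  next
    case (step n) then show ?case using mono[of n] by linarith
  qed
  have q1p: "q1 > 0" unfolding q1_def using dpos[of 1] by simp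
  have Kp: "K > 0"
  proof -
    have "L1 * q1 / Cinf \<ge> 0" using L q1p Cinfp by simp
    moreover have "L0 > 0 \<or> L1 * q1 / Cinf > 0" using L q1p Cinfp by auto
    ultimately show ?thesis using L unfolding K_def by linarith
  qed
  have ap: "a > 0" unfolding a_def using Kp by simp
  have contr: "a * d t powr (2 - 2*\<xi>) \<le> (norm (g (\<theta> t)))\<^sup>2 / (2 * \<beta> (\<theta> t))" if t: "t \<ge> 1" for t
  proof -
    define D where "D = d t"
    define G where "G = norm (g (\<theta> t))"
    define b where "b = \<beta> (\<theta> t)"
    define q where "q = D powr (1 - \<xi>)"
    have D: "D > 0" unfolding D_def using dpos[OF t] .
    have G: "G > 0" unfolding G_def using nz[OF t] by simp
    have b: "b > 0" unfolding b_def using bp .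
    have q: "q > 0" unfolding q_def using D by simp
    have Dd: "D = f (\<theta> t) - fstar f" unfolding D_def d_def by (rule refl)
    have e2: "(1 - \<xi>) + (1 - \<xi>) = 2 - 2*\<xi>" by simp
    have qq: "D powr (2 - 2*\<xi>) = q^2"
      unfolding q_def power2_eq_square e2[symmetric] by (rule powr_add)
    have qle: "q \<le> q1" unfolding q_def q1_def D_def
      by (rule powr_mono2[OF _ less_imp_le[OF dpos[OF t]] dle1[OF t]]) (use xi in simp)
    have Gq: "G \<ge> Cinf * q"
    proof -
      have ab: "\<bar>f (\<theta> t) - fstar f\<bar> = D" using D unfolding Dd by simp
      have "G \<ge> C (\<theta> t) * q" using NLi[of "\<theta> t"] unfolding ab q_def[symmetric] G_def[symmetric] .
      moreover have "C (\<theta> t) * q \<ge> Cinf * q" by (rule mult_right_mono[OF Cle[OF t] less_imp_le[OF q]])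
      ultimately show ?thesis by linarith
    qed
    have bb: "b \<le> L0 * G^2 / q^2 + L1 * G"
    proof -
      have "\<beta> (\<theta> t) \<le> L0 * (norm (g (\<theta> t)))\<^sup>2 / (f (\<theta> t) - fstar f) powr (2 - 2 * \<xi>) + L1 * norm (g (\<theta> t))"
        by (rule beta_bound[OF pos[OF t]])
      thus ?thesis unfolding Dd[symmetric] qq b_def[symmetric] G_def[symmetric] .
    qed
    have "1/2 * inverse K * q^2 \<le> G^2 / (2*b)"
      by (rule contr_aux[OF G b q qle Gq Cinfp L(1) L(2) bb K_def Kp])
    thus ?thesis unfolding a_def D_def[symmetric] qq G_def[symmetric] b_def[symmetric] .
  qed
  have rec: "d (Suc t) \<le> d t - a * d t powr (2 - 2*\<xi>)" if "t \<ge> 1" for t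
    using step[OF that] contr[OF that] by linarith
  have part1: "\<forall>t\<ge>1. f (\<theta> (Suc t)) - fstar f \<le> f (\<theta> t) - fstar f"
    using mono unfolding d_def by blast
  have part2: "\<xi> < 1/2 \<longrightarrow> (\<forall>t\<ge>1. d t \<le>
        (d 1 powr (-(1 - 2*\<xi>)) + (1 - 2*\<xi>) * a * (real t - 1)) powr (-(1 / (1 - 2*\<xi>))))"
  proof (intro impI allI)
    fix t :: nat assume x: "\<xi> < 1/2" and tt: "1 \<le> t"
    have e: "1 + (1 - 2*\<xi>) = 2 - 2*\<xi>" by simp
    have r: "d (Suc t) \<le> d t - a * d t powr (1 + (1 - 2*\<xi>))" if "t \<ge> 1" for t
      unfolding e using rec[OF that] .
    have p: "1 - 2*\<xi> > 0" using x by simp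
    show "d t \<le> (d 1 powr (-(1 - 2*\<xi>)) + (1 - 2*\<xi>) * a * (real t - 1)) powr (-(1 / (1 - 2*\<xi>)))"
      by (rule rec_pow[of d a "1 - 2*\<xi>" t, OF dpos r ap p tt])
  qed
  have part3: "\<xi> = 1/2 \<longrightarrow> (\<forall>t\<ge>1. d t \<le>
        exp (- (Cinf * (real t - 1) / (2 * (L0 * Cinf + L1 * d 1 powr (1/2))))) * d 1)"
  proof (intro impI allI)
    fix t :: nat assume x: "\<xi> = 1/2" and tt: "1 \<le> t"
    have r: "d (Suc t) \<le> d t - a * d t" if "t \<ge> 1" for t
    proof -
      have ee: "2 - 2*\<xi> = 1" using x by simp
      have "d t powr (2 - 2*\<xi>) = d t" unfolding ee using dpos[OF that] by simp
      thus ?thesis using rec[OF that] by simp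
    qed
    have KC: "L0 * Cinf + L1 * d 1 powr (1/2) = K * Cinf"
    proof -
      have x': "1 - \<xi> = 1/2" using x by simp
      show ?thesis unfolding K_def q1_def x' using Cinfp by (simp add: field_simps)
    qed
    have eq: "Cinf * (real t - 1) / (2 * (L0 * Cinf + L1 * d 1 powr (1/2))) = a * (real t - 1)"
      unfolding KC a_def using Cinfp Kp by (intro aux_eq) auto
    show "d t \<le> exp (- (Cinf * (real t - 1) / (2 * (L0 * Cinf + L1 * d 1 powr (1/2))))) * d 1"
      unfolding eq by (rule rec_exp[of d a t, OF dpos r tt])
  qed
  have ad: "a = 1/2 * inverse (L0 + L1 * (\<lambda>x. f x - fstar f) (\<theta> 1) powr (1 - \<xi>) / (INF t\<in>{1..}. C (\<theta> t)))"
    unfolding a_def K_def q1_def d_def Cinf_def by (rule refl)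
  show ?thesis
    by (rule final_form[where \<delta>="\<lambda>x. f x - fstar f" and Cinf="INF t\<in>{1..}. C (\<theta> t)" and a=a,
          OF part1 part2[unfolded d_def Cinf_def] part3[unfolded d_def Cinf_def] ad])
qed

end
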